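(* Let $\alpha>0$, $\lambda=2\alpha/(\alpha+\sqrt{\alpha^2+4L\alpha})$, $y_0\in\mathrm{dom}\, h$, and run TAA: $s_0=\nabla f(y_0)$, $x_0=\mathrm{argmin}_x\{\langle s_0,x\rangle+h^\alpha(x)\}$, and for $k\ge0$: $\tilde x_{k+1}=(1-\lambda)y_k+\lambda x_k$, $s_{k+1}=(1-\lambda)s_k+\lambda\nabla f(\tilde x_{k+1})$, $x_{k+1}=\mathrm{argmin}_x\{\langle s_{k+1},x\rangle+h^\alpha(x)\}$, $y_{k+1}=(1-\lambda)y_k+\lambda x_{k+1}$. Let $\Gamma_k$ be the ACP model induced by $(y_0,\{\tilde x_{i+1}\}_{i=0}^{k-1},(\lambda,\dots,\lambda))$. Then for all $k\ge0$, $\min_{x\in\mathbb{R}^n}\Gamma_k(x)\ge\phi^\alpha(y_k)-(1-\lambda)^k\Delta$, where $\Delta=\phi^\alpha(y_0)-\Gamma_0(x_0)$.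
   Context: Let $\|\cdot\|$ be a norm on $\mathbb{R}^n$. Let $f:\mathbb{R}^n\to\mathbb{R}$ be convex, differentiable and $L$-smooth ($L>0$) with respect to $\|\cdot\|$, $h:\mathbb{R}^n\to(-\infty,\infty]$ closed proper convex with bounded domain, and $w:\mathbb{R}^n\to[0,+\infty]$ closed, $1$-strongly convex with respect to $\|\cdot\|$ on $\mathrm{dom}\, h$, with $\max_{\mathrm{dom}\, h}w<\infty$. Let $h^\alpha=h+\alpha w$, $\phi^\alpha=f+h^\alpha$, $\ell_f(x;x_0)=f(x_0)+\langle\nabla f(x_0),x-x_0\rangle$. The ACP model induced by $(y_0,\{p_i\}_{i=0}^{k-1},\zeta)$, $\zeta\in[0,1]^k$, is $\Gamma_0(x)=h^\alpha(x)+\ell_f(x;y_0)$, $\Gamma_{j+1}(x)=(1-\zeta_j)\Gamma_j(x)+\zeta_j(h^\alpha(x)+\ell_f(x;p_j))$. *)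

theory Defs
  imports "HOL-Analysis.Analysis"
begin

definition is_norm :: "('a::real_vector \<Rightarrow> real) \<Rightarrow> bool" where
  "is_norm N \<longleftrightarrow> (\<forall>x. N x = 0 \<longleftrightarrow> x = 0) \<and> (\<forall>c x. N (c *\<^sub>R x) = \<bar>c\<bar> * N x)
     \<and> (\<forall>x y. N (x + y) \<le> N x + N y)"

definition dual_norm :: "('a::real_inner \<Rightarrow> real) \<Rightarrow> 'a \<Rightarrow> real" where
  "dual_norm N s = Sup {s \<bullet> x | x. N x \<le> 1}"

definition L_smooth :: "('a::real_inner \<Rightarrow> real) \<Rightarrow> real \<Rightarrow> ('a \<Rightarrow> real) \<Rightarrow> ('a \<Rightarrow> 'a) \<Rightarrow> bool" where
  "L_smooth N L f g \<longleftrightarrow> (\<forall>x y. dual_norm N (g x - g y) \<le> L * N (x - y))"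

definition edom :: "('a \<Rightarrow> ereal) \<Rightarrow> 'a set" where
  "edom h = {x. h x < \<infinity>}"

definition closed_fun :: "('a::topological_space \<Rightarrow> ereal) \<Rightarrow> bool" where
  "closed_fun h \<longleftrightarrow> closed {(x, t::real). h x \<le> ereal t}"

definition proper_convex :: "('a::real_vector \<Rightarrow> ereal) \<Rightarrow> bool" where
  "proper_convex h \<longleftrightarrow> (\<forall>x. h x \<noteq> -\<infinity>) \<and> edom h \<noteq> {} \<and>
     convex (edom h) \<and> convex_on (edom h) (\<lambda>x. real_of_ereal (h x))"

text \<open>1-strong convexity of w with respect to N on the set D
  (w is assumed finite on D, so it is stated for the real values).\<close>
definition strongly_convex_on :: "('a::real_vector \<Rightarrow> real) \<Rightarrow> 'a set \<Rightarrow> ('a \<Rightarrow> ereal) \<Rightarrow> bool" where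
  "strongly_convex_on N D w \<longleftrightarrow> (\<forall>x\<in>D. \<forall>y\<in>D. \<forall>t\<in>{0..1}.
     w (t *\<^sub>R x + (1 - t) *\<^sub>R y) \<le>
       ereal (t * real_of_ereal (w x) + (1 - t) * real_of_ereal (w y) - t * (1 - t) / 2 * (N (x - y))\<^sup>2))"

definition lin :: "('a::real_inner \<Rightarrow> real) \<Rightarrow> ('a \<Rightarrow> 'a) \<Rightarrow> 'a \<Rightarrow> 'a \<Rightarrow> real" where
  "lin f g x0 x = f x0 + g x0 \<bullet> (x - x0)"

fun ACP :: "('a::real_inner \<Rightarrow> ereal) \<Rightarrow> ('a \<Rightarrow> real) \<Rightarrow> ('a \<Rightarrow> 'a) \<Rightarrow> 'a \<Rightarrow> (nat \<Rightarrow> 'a)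
     \<Rightarrow> (nat \<Rightarrow> real) \<Rightarrow> nat \<Rightarrow> 'a \<Rightarrow> ereal" where
  "ACP ha f g y0 p \<zeta> 0 x = ha x + ereal (lin f g y0 x)"
| "ACP ha f g y0 p \<zeta> (Suc j) x =
     ereal (1 - \<zeta> j) * ACP ha f g y0 p \<zeta> j x + ereal (\<zeta> j) * (ha x + ereal (lin f g (p j) x))"

end

theory Submission
  imports Defs "HOL-Analysis.Analysis"
begin

lemma line_deriv:
  fixes f :: "'a::real_inner \<Rightarrow> real"
  assumes f_grad: "\<And>z. (f has_derivative (\<lambda>v. g z \<bullet> v)) (at z)"
  shows "((\<lambda>t. f (x + t *\<^sub>R d)) has_real_derivative (g (x + t *\<^sub>R d) \<bullet> d)) (at t)"
proof -
  have 1: "((\<lambda>t. x + t *\<^sub>R d) has_derivative (\<lambda>h. h *\<^sub>R d)) (at t)"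
    by (auto intro!: derivative_eq_intros)
  have "((\<lambda>t. f (x + t *\<^sub>R d)) has_derivative (\<lambda>h. g (x + t *\<^sub>R d) \<bullet> (h *\<^sub>R d))) (at t)"
    using has_derivative_compose[OF 1 f_grad] by (simp add: o_def)
  moreover have "(\<lambda>h. g (x + t *\<^sub>R d) \<bullet> (h *\<^sub>R d)) = (*) (g (x + t *\<^sub>R d) \<bullet> d)"
    by (auto simp: fun_eq_iff inner_scaleR_right)
  ultimately show ?thesis by (simp add: has_field_derivative_def)
qed

lemma tangent_ineq:
  fixes f :: "'a::real_inner \<Rightarrow> real"
  assumes f_conv: "convex_on UNIV f"
    and f_grad: "\<And>z. (f has_derivative (\<lambda>v. g z \<bullet> v)) (at z)"
  shows "f x + g x \<bullet> (y - x) \<le> f y"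
proof -
  define d where "d = y - x"
  define \<phi> where "\<phi> = (\<lambda>t::real. f (x + t *\<^sub>R d))"
  have cv: "convex_on UNIV \<phi>"
  proof (rule convex_onI)
    fix t a b :: real assume t: "0 < t" "t < 1"
    have "(1 - t) *\<^sub>R (x + a *\<^sub>R d) + t *\<^sub>R (x + b *\<^sub>R d) = x + ((1 - t) *\<^sub>R a + t *\<^sub>R b) *\<^sub>R d"
      by (simp add: algebra_simps)
    then show "\<phi> ((1 - t) *\<^sub>R a + t *\<^sub>R b) \<le> (1 - t) * \<phi> a + t * \<phi> b"
      unfolding \<phi>_def using convex_onD[OF f_conv, of t "x + a *\<^sub>R d" "x + b *\<^sub>R d"] t by simp
  qed simp
  have "\<phi> 1 - \<phi> 0 \<ge> (g (x + 0 *\<^sub>R d) \<bullet> d) * (1 - 0)"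
    apply (rule convex_on_imp_above_tangent[OF cv])
    using line_deriv[OF f_grad, of x d 0] by (auto simp: \<phi>_def has_field_derivative_at_within)
  then show ?thesis by (simp add: \<phi>_def d_def)
qed


lemma isn_0: "is_norm N \<Longrightarrow> N 0 = 0" by (simp add: is_norm_def)
lemma isn_scale: "is_norm N \<Longrightarrow> N (c *\<^sub>R x) = \<bar>c\<bar> * N x" by (simp add: is_norm_def)
lemma isn_tri: "is_norm N \<Longrightarrow> N (x + y) \<le> N x + N y" by (simp add: is_norm_def)
lemma isn_zero_iff: "is_norm N \<Longrightarrow> N x = 0 \<longleftrightarrow> x = 0" by (simp add: is_norm_def)
lemma isn_minus: "is_norm N \<Longrightarrow> N (- x) = N x"
  using isn_scale[of N "-1" x] by simp
lemma isn_nonneg: "is_norm N \<Longrightarrow> N x \<ge> 0"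
  using isn_tri[of N x "-x"] isn_0[of N] isn_minus[of N x] by simp
lemma isn_commute: "is_norm N \<Longrightarrow> N (x - y) = N (y - x)"
  using isn_minus[of N "x - y"] by simp
lemma isn_sum: assumes "is_norm N" "finite A" shows "N (sum f A) \<le> (\<Sum>i\<in>A. N (f i))"
  using assms(2)
proof (induction A rule: finite_induct)
  case empty then show ?case by (simp add: isn_0[OF assms(1)])
next
  case (insert a A)
  then show ?case using isn_tri[OF assms(1), of "f a" "sum f A"] by simp
qed

lemma isn_upper:
  fixes N :: "real^'n \<Rightarrow> real"
  assumes "is_norm N"
  shows "\<exists>C. \<forall>x. N x \<le> C * norm x"
proof -
  define C where "C = (\<Sum>i\<in>UNIV. N (axis i (1::real)))"
  have "N x \<le> C * norm x" for x
  proof -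
    have "N x = N (\<Sum>i\<in>UNIV. x$i *\<^sub>R axis i 1)"
      using basis_expansion[of x] by (simp add: scalar_mult_eq_scaleR)
    also have "\<dots> \<le> (\<Sum>i\<in>UNIV. N (x$i *\<^sub>R axis i 1))" by (rule isn_sum[OF assms]) simp
    also have "\<dots> = (\<Sum>i\<in>UNIV. \<bar>x$i\<bar> * N (axis i 1))" by (simp add: isn_scale[OF assms])
    also have "\<dots> \<le> (\<Sum>i\<in>UNIV. norm x * N (axis i 1))"
      by (rule sum_mono) (simp add: component_le_norm_cart isn_nonneg[OF assms] mult_right_mono)
    also have "\<dots> = C * norm x" by (simp add: C_def sum_distrib_left mult.commute)
    finally show ?thesis .
  qed
  then show ?thesis by blast
qed

lemma isn_lower:
  fixes N :: "real^'n \<Rightarrow> real"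
  assumes "is_norm N"
  shows "\<exists>c>0. \<forall>x. c * norm x \<le> N x"
proof -
  obtain C where C: "\<And>x. N x \<le> C * norm x" using isn_upper[OF assms] by blast
  define C1 where "C1 = \<bar>C\<bar> + 1"
  have C1: "N x \<le> C1 * norm x" "C1 > 0" for x
    using C[of x] unfolding C1_def by (auto intro: order_trans[OF _ mult_right_mono])
  have lip: "\<bar>N x - N y\<bar> \<le> C1 * dist x y" for x y
  proof -
    have "N x \<le> N y + N (x - y)" using isn_tri[OF assms, of y "x - y"] by simp
    moreover have "N y \<le> N x + N (y - x)" using isn_tri[OF assms, of x "y - x"] by simp
    moreover have "N (x - y) \<le> C1 * dist x y" "N (y - x) \<le> C1 * dist x y"
      using C1(1)[of "x - y"] C1(1)[of "y - x"] by (auto simp: dist_norm norm_minus_commute)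
    ultimately show ?thesis by linarith
  qed
  have cont: "continuous_on UNIV N"
    unfolding continuous_on_iff
  proof (intro ballI allI impI)
    fix x :: "real^'n" and e :: real assume e: "e > 0"
    show "\<exists>d>0. \<forall>x'\<in>UNIV. dist x' x < d \<longrightarrow> dist (N x') (N x) < e"
    proof (intro exI[of _ "e / C1"] conjI ballI impI)
      show "e / C1 > 0" using e C1(2) by simp
      fix x' assume "dist x' x < e / C1"
      then have "C1 * dist x' x < e" using C1(2) by (simp add: field_simps)
      then show "dist (N x') (N x) < e" using lip[of x' x] by (simp add: dist_real_def)
    qed
  qed
  have ne: "sphere (0::real^'n) 1 \<noteq> {}"
  proof -
    obtain i :: 'n where True by simp
    have "norm (axis i (1::real)) = 1" by simp
    then show ?thesis by (auto simp: sphere_def dist_norm intro!: exI[of _ "axis i (1::real)"])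
  qed
  obtain m where m: "m \<in> sphere 0 1" "\<And>y. y \<in> sphere 0 1 \<Longrightarrow> N m \<le> N y"
    using continuous_attains_inf[OF compact_sphere ne continuous_on_subset[OF cont]] by blast
  have mpos: "N m > 0"
    using m(1) isn_zero_iff[OF assms, of m] isn_nonneg[OF assms, of m] by (auto simp: sphere_def)
  have "N m * norm x \<le> N x" for x
  proof (cases "x = 0")
    case True then show ?thesis by (simp add: isn_0[OF assms])
  next
    case False
    then have "(1 / norm x) *\<^sub>R x \<in> sphere 0 1" by (simp add: sphere_def dist_norm)
    then have "N m \<le> N ((1 / norm x) *\<^sub>R x)" by (rule m(2))
    also have "\<dots> = N x / norm x" by (simp add: isn_scale[OF assms])
    finally show ?thesis using False by (simp add: field_simps)
  qed
  then show ?thesis using mpos by blast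
qed

lemma dual_bound:
  fixes N :: "real^'n \<Rightarrow> real"
  assumes "is_norm N"
  shows "a \<bullet> v \<le> dual_norm N a * N v"
proof -
  obtain c where c: "c > 0" "\<And>x. c * norm x \<le> N x" using isn_lower[OF assms] by blast
  have bdd: "bdd_above {a \<bullet> x | x. N x \<le> 1}"
  proof (rule bdd_aboveI)
    fix t assume "t \<in> {a \<bullet> x | x. N x \<le> 1}"
    then obtain x where x: "t = a \<bullet> x" "N x \<le> 1" by blast
    have "norm x \<le> 1 / c" using c(2)[of x] x(2) c(1) by (simp add: field_simps)
    have "t \<le> norm a * norm x" using x(1) Cauchy_Schwarz_ineq2[of a x] by (simp add: abs_le_iff)
    also have "\<dots> \<le> norm a * (1 / c)" by (rule mult_left_mono) (use \<open>norm x \<le> 1 / c\<close> in auto)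
    finally show "t \<le> norm a * (1 / c)" .
  qed
  show ?thesis
  proof (cases "v = 0")
    case True then show ?thesis by (simp add: isn_0[OF assms])
  next
    case False
    then have Nv: "N v > 0" using isn_zero_iff[OF assms, of v] isn_nonneg[OF assms, of v] by auto
    have "N ((1 / N v) *\<^sub>R v) = 1" using Nv by (simp add: isn_scale[OF assms])
    then have "a \<bullet> ((1 / N v) *\<^sub>R v) \<le> dual_norm N a"
      unfolding dual_norm_def by (intro cSup_upper[OF _ bdd]) (auto intro!: exI[of _ "(1 / N v) *\<^sub>R v"])
    then show ?thesis using Nv by (simp add: field_simps)
  qed
qed


lemma descent:
  fixes N :: "real^'n \<Rightarrow> real" and f :: "real^'n \<Rightarrow> real"
  assumes norm: "is_norm N" and sm: "L_smooth N L f g"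
    and f_grad: "\<And>z. (f has_derivative (\<lambda>v. g z \<bullet> v)) (at z)"
  shows "f y \<le> f x + g x \<bullet> (y - x) + L / 2 * (N (y - x))\<^sup>2"
proof -
  define d where "d = y - x"
  define \<psi> where "\<psi> = (\<lambda>t. f (x + t *\<^sub>R d) - t * (g x \<bullet> d) - L * t\<^sup>2 / 2 * (N d)\<^sup>2)"
  have D: "DERIV \<psi> t :> g (x + t *\<^sub>R d) \<bullet> d - g x \<bullet> d - L * t * (N d)\<^sup>2" for t
    unfolding \<psi>_def
    by (rule line_deriv[OF f_grad] derivative_eq_intros refl | simp)+
  have "\<psi> 1 \<le> \<psi> 0"
  proof (rule DERIV_nonpos_imp_nonincreasing[of 0 1 \<psi>])
    fix t :: real assume t: "0 \<le> t" "t \<le> 1"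
    have "(g (x + t *\<^sub>R d) - g x) \<bullet> d \<le> dual_norm N (g (x + t *\<^sub>R d) - g x) * N d"
      by (rule dual_bound[OF norm])
    also have "\<dots> \<le> L * N (x + t *\<^sub>R d - x) * N d"
      using sm unfolding L_smooth_def by (intro mult_right_mono isn_nonneg[OF norm]) (metis add_diff_cancel_left')
    also have "\<dots> = L * t * (N d)\<^sup>2" using t by (simp add: isn_scale[OF norm] power2_eq_square)
    finally have "g (x + t *\<^sub>R d) \<bullet> d - g x \<bullet> d - L * t * (N d)\<^sup>2 \<le> 0"
      by (simp add: inner_diff_left)
    then show "\<exists>y. DERIV \<psi> t :> y \<and> y \<le> 0" using D by blast
  qed simp
  then show ?thesis by (simp add: \<psi>_def d_def)
qed

theorem propositionD1:
  fixes N :: "real^'n \<Rightarrow> real"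
    and f :: "real^'n \<Rightarrow> real" and g :: "real^'n \<Rightarrow> real^'n"
    and h w :: "real^'n \<Rightarrow> ereal"
    and L \<alpha> lam :: real
    and x y xt s :: "nat \<Rightarrow> real^'n"
  assumes norm: "is_norm N"
    and f_conv: "convex_on UNIV f"
    and f_grad: "\<And>z. (f has_derivative (\<lambda>v. g z \<bullet> v)) (at z)"
    and L_pos: "L > 0"
    and f_smooth: "L_smooth N L f g"
    and h_pc: "proper_convex h" and h_closed: "closed_fun h" and h_bdd: "bounded (edom h)"
    and w_nonneg: "\<And>z. w z \<ge> 0" and w_closed: "closed_fun w"
    and w_sc: "strongly_convex_on N (edom h) w"
    and w_max: "\<exists>M::real. \<forall>z\<in>edom h. w z \<le> ereal M"
    and \<alpha>_pos: "\<alpha> > 0"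
    and lam_def: "lam = 2 * \<alpha> / (\<alpha> + sqrt (\<alpha>\<^sup>2 + 4 * L * \<alpha>))"
    and y0_dom: "y 0 \<in> edom h"
    and s0: "s 0 = g (y 0)"
    and x_min: "\<And>k z. ereal (s k \<bullet> x k) + (h (x k) + ereal \<alpha> * w (x k))
                        \<le> ereal (s k \<bullet> z) + (h z + ereal \<alpha> * w z)"
    and xt_step: "\<And>k. xt (Suc k) = (1 - lam) *\<^sub>R y k + lam *\<^sub>R x k"
    and s_step: "\<And>k. s (Suc k) = (1 - lam) *\<^sub>R s k + lam *\<^sub>R g (xt (Suc k))"
    and y_step: "\<And>k. y (Suc k) = (1 - lam) *\<^sub>R y k + lam *\<^sub>R x (Suc k)"
  shows "\<forall>k. (INF z. ACP (\<lambda>z. h z + ereal \<alpha> * w z) f g (y 0) (\<lambda>i. xt (Suc i)) (\<lambda>_. lam) k z)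
           \<ge> (ereal (f (y k)) + (h (y k) + ereal \<alpha> * w (y k)))
              - ereal ((1 - lam) ^ k) *
                ((ereal (f (y 0)) + (h (y 0) + ereal \<alpha> * w (y 0)))
                 - ACP (\<lambda>z. h z + ereal \<alpha> * w z) f g (y 0) (\<lambda>i. xt (Suc i)) (\<lambda>_. lam) 0 (x 0))"
proof -
  define D where "D = edom h"
  define ha where "ha = (\<lambda>z. h z + ereal \<alpha> * w z)"
  define H where "H = (\<lambda>z. real_of_ereal (h z))"
  define W where "W = (\<lambda>z. real_of_ereal (w z))"
  define HA where "HA = (\<lambda>z. H z + \<alpha> * W z)"
  obtain M :: real where M: "\<And>z. z \<in> D \<Longrightarrow> w z \<le> ereal M" using w_max unfolding D_def by blast
  have hninf: "h z \<noteq> -\<infinity>" for z using h_pc unfolding proper_convex_def by blast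
  have convD: "convex D" using h_pc unfolding proper_convex_def D_def by blast
  have Hconv: "convex_on D H" using h_pc unfolding proper_convex_def D_def H_def by blast
  have hfin: "z \<in> D \<Longrightarrow> h z = ereal (H z)" for z
    using hninf[of z] unfolding D_def edom_def H_def by (cases "h z") auto
  have wfin: "z \<in> D \<Longrightarrow> w z = ereal (W z)" for z
    using M[of z] w_nonneg[of z] unfolding W_def by (cases "w z") auto
  have hafin: "z \<in> D \<Longrightarrow> ha z = ereal (HA z)" for z
    using hfin wfin unfolding ha_def HA_def by simp
  have hainf: "z \<notin> D \<Longrightarrow> ha z = \<infinity>" for z
  proof -
    assume "z \<notin> D"
    then have "h z = \<infinity>" unfolding D_def edom_def by (simp add: top.not_eq_extremum)
    moreover have "ereal \<alpha> * w z \<ge> 0" using w_nonneg[of z] \<alpha>_pos by simp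
    ultimately show ?thesis unfolding ha_def by (cases "ereal \<alpha> * w z") auto
  qed
  define S where "S = sqrt (\<alpha>\<^sup>2 + 4 * L * \<alpha>)"
  have S2: "S\<^sup>2 = \<alpha>\<^sup>2 + 4 * L * \<alpha>" unfolding S_def using L_pos \<alpha>_pos by simp
  have Sgt: "S > \<alpha>" unfolding S_def using L_pos \<alpha>_pos by (intro real_less_rsqrt) (simp add: power2_eq_square)
  have lam_eq: "lam = 2 * \<alpha> / (\<alpha> + S)" using lam_def S_def by simp
  have lam_pos: "lam > 0" using lam_eq Sgt \<alpha>_pos by simp
  have lam_lt1: "lam < 1" using lam_eq Sgt \<alpha>_pos by simp
  have lam_alt: "lam = (S - \<alpha>) / (2 * L)"
  proof -
    have e: "4 * L * \<alpha> = (S - \<alpha>) * (\<alpha> + S)" using S2 by (simp add: algebra_simps power2_eq_square)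
    have "2 * L * lam = 4 * L * \<alpha> / (\<alpha> + S)" using lam_eq by simp
    also have "\<dots> = S - \<alpha>" unfolding e using Sgt \<alpha>_pos by simp
    finally show ?thesis using L_pos by (simp add: field_simps)
  qed
  have lamL: "L * lam\<^sup>2 = (1 - lam) * \<alpha>"
    unfolding lam_alt using L_pos S2 by (simp add: field_simps power2_eq_square)
  define cc where "cc = (\<lambda>p. f p - g p \<bullet> p)"
  have lin_eq: "lin f g p z = cc p + g p \<bullet> z" for p z
    unfolding lin_def cc_def by (simp add: inner_diff_right)
  define c where "c = rec_nat (cc (y 0)) (\<lambda>k ck. (1 - lam) * ck + lam * cc (xt (Suc k)))"
  have c0: "c 0 = cc (y 0)" and cS: "c (Suc k) = (1 - lam) * c k + lam * cc (xt (Suc k))" for k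
    unfolding c_def by simp_all
  define Gam where "Gam = ACP ha f g (y 0) (\<lambda>i. xt (Suc i)) (\<lambda>_. lam)"
  have Gam_eq: "Gam k z = ha z + ereal (c k + s k \<bullet> z)" for k z
  proof (induction k)
    case 0 then show ?case unfolding Gam_def by (simp add: c0 s0 lin_eq)
  next
    case (Suc k)
    have "Gam (Suc k) z = ereal (1 - lam) * Gam k z + ereal lam * (ha z + ereal (lin f g (xt (Suc k)) z))"
      unfolding Gam_def by simp
    also have "\<dots> = ha z + ereal (c (Suc k) + s (Suc k) \<bullet> z)"
    proof (cases "z \<in> D")
      case True
      then show ?thesis unfolding Suc hafin[OF True] cS s_step lin_eq
        by (simp add: algebra_simps inner_add_left)
    next
      case False
      then show ?thesis unfolding Suc hainf[OF False] using lam_pos lam_lt1 by simp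
    qed
    finally show ?case .
  qed
  define G where "G = (\<lambda>k z. HA z + c k + s k \<bullet> z)"
  have Gam_fin: "z \<in> D \<Longrightarrow> Gam k z = ereal (G k z)" for k z
    unfolding Gam_eq G_def using hafin by simp
  have y0D: "y 0 \<in> D" using y0_dom D_def by simp
  have xD: "x k \<in> D" for k
  proof (rule ccontr)
    assume "x k \<notin> D"
    then have "ereal (s k \<bullet> x k) + ha (x k) = \<infinity>" using hainf by simp
    moreover have "ereal (s k \<bullet> x k) + ha (x k) \<le> ereal (s k \<bullet> y 0) + ha (y 0)"
      using x_min[of k "y 0"] unfolding ha_def .
    ultimately show False using hafin[OF y0D] by simp
  qed
  have xmin: "z \<in> D \<Longrightarrow> s k \<bullet> x k + HA (x k) \<le> s k \<bullet> z + HA z" for k z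
  proof -
    assume zD: "z \<in> D"
    have "ereal (s k \<bullet> x k) + ha (x k) \<le> ereal (s k \<bullet> z) + ha z"
      using x_min[of k z] unfolding ha_def .
    then show ?thesis using hafin[OF zD] hafin[OF xD[of k]] by simp
  qed
  have yD: "y k \<in> D" for k
  proof (induction k)
    case 0 then show ?case using y0D .
  next
    case (Suc k) then show ?case unfolding y_step using convD xD lam_pos lam_lt1
      by (intro convexD) auto
  qed
  have HAsc: "HA (t *\<^sub>R a + (1 - t) *\<^sub>R b) \<le> t * HA a + (1 - t) * HA b - \<alpha> * (t * (1 - t) / 2 * (N (a - b))\<^sup>2)"
    if "a \<in> D" "b \<in> D" "0 \<le> t" "t \<le> 1" for a b t
  proof -
    have pD: "t *\<^sub>R a + (1 - t) *\<^sub>R b \<in> D" using convD that by (intro convexD) auto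
    have "H ((1 - t) *\<^sub>R b + t *\<^sub>R a) \<le> (1 - t) * H b + t * H a"
      using convex_onD[OF Hconv, of t b a] that by simp
    then have 1: "H (t *\<^sub>R a + (1 - t) *\<^sub>R b) \<le> t * H a + (1 - t) * H b" by (simp add: add.commute)
    have "w (t *\<^sub>R a + (1 - t) *\<^sub>R b) \<le> ereal (t * W a + (1 - t) * W b - t * (1 - t) / 2 * (N (a - b))\<^sup>2)"
      using w_sc that unfolding strongly_convex_on_def D_def W_def by auto
    then have 2: "W (t *\<^sub>R a + (1 - t) *\<^sub>R b) \<le> t * W a + (1 - t) * W b - t * (1 - t) / 2 * (N (a - b))\<^sup>2"
      using wfin[OF pD] by simp
    have "\<alpha> * W (t *\<^sub>R a + (1 - t) *\<^sub>R b) \<le> \<alpha> * (t * W a + (1 - t) * W b - t * (1 - t) / 2 * (N (a - b))\<^sup>2)"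
      using 2 \<alpha>_pos by (intro mult_left_mono) auto
    then show ?thesis using 1 unfolding HA_def by (simp add: algebra_simps)
  qed
  have Gmin: "G k (x k) \<le> G k z" if "z \<in> D" for k z
    using xmin[OF that, of k] unfolding G_def by simp
  have qgrow: "G k (x k) + \<alpha> / 2 * (N (z - x k))\<^sup>2 \<le> G k z" if zD: "z \<in> D" for k z
  proof -
    define Q where "Q = \<alpha> / 2 * (N (z - x k))\<^sup>2"
    define a where "a = G k z - G k (x k)"
    have Q0: "Q \<ge> 0" unfolding Q_def using \<alpha>_pos by simp
    have key: "(1 - t) * Q \<le> a" if t: "0 < t" "t < 1" for t
    proof -
      define p where "p = t *\<^sub>R z + (1 - t) *\<^sub>R x k"
      have "G k (x k) \<le> G k p" using Gmin convD zD xD t unfolding p_def by (intro Gmin convexD) auto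
      also have "\<dots> \<le> t * G k z + (1 - t) * G k (x k) - t * ((1 - t) * Q)"
      proof -
        have "HA p \<le> t * HA z + (1 - t) * HA (x k) - \<alpha> * (t * (1 - t) / 2 * (N (z - x k))\<^sup>2)"
          unfolding p_def using HAsc[OF zD xD[of k], of t] t by simp
        moreover have "s k \<bullet> p = t * (s k \<bullet> z) + (1 - t) * (s k \<bullet> x k)"
          unfolding p_def by (simp add: inner_add_right)
        ultimately show ?thesis unfolding G_def Q_def by (simp add: algebra_simps)
      qed
      finally have "t * ((1 - t) * Q) \<le> t * a" unfolding a_def by (simp add: algebra_simps)
      then show ?thesis using t by simp
    qed
    have "Q \<le> a"
    proof (rule ccontr)
      assume "\<not> Q \<le> a"
      then have lt: "a < Q" by simp
      have h2: "Q / 2 \<le> a" using key[of "1/2"] by simp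
      then have Qp: "Q > 0" using lt by linarith
      define t where "t = (Q - a) / (2 * Q)"
      have t0: "0 < t" unfolding t_def using lt Qp by simp
      have t1: "t < 1" unfolding t_def using lt Qp h2 by (simp add: field_simps)
      have "(1 - t) * Q = (Q + a) / 2" unfolding t_def using Qp by (simp add: field_simps)
      then show False using key[OF t0 t1] lt by simp
    qed
    then show ?thesis unfolding Q_def a_def by simp
  qed
  define Phi where "Phi = (\<lambda>z. f z + HA z)"
  define Del where "Del = Phi (y 0) - G 0 (x 0)"
  have GS: "G (Suc k) z = (1 - lam) * G k z + lam * (HA z + lin f g (xt (Suc k)) z)" for k z
    unfolding G_def cS s_step lin_eq by (simp add: algebra_simps inner_add_left)
  have main: "Phi (y k) - (1 - lam) ^ k * Del \<le> G k (x k)" for k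
  proof (induction k)
    case 0 then show ?case unfolding Del_def by simp
  next
    case (Suc k)
    define X where "X = x (Suc k)"
    define T where "T = xt (Suc k)"
    define u where "u = y (Suc k)"
    define r where "r = N (X - x k)"
    have XD: "X \<in> D" unfolding X_def by (rule xD)
    have u_eq: "u = lam *\<^sub>R X + (1 - lam) *\<^sub>R y k" unfolding u_def X_def y_step by simp
    have uT: "u - T = lam *\<^sub>R (X - x k)" unfolding u_eq T_def xt_step by (simp add: algebra_simps)
    have 1: "G (Suc k) X = (1 - lam) * G k X + lam * HA X + lam * lin f g T X"
      unfolding GS T_def by (simp add: algebra_simps)
    have 2: "G k (x k) + \<alpha> / 2 * r\<^sup>2 \<le> G k X" unfolding r_def by (rule qgrow[OF XD])
    have 4: "lin f g T (y k) \<le> f (y k)" unfolding lin_def using tangent_ineq[OF f_conv f_grad] by simp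
    have 5: "HA u \<le> lam * HA X + (1 - lam) * HA (y k)"
    proof -
      have "HA u \<le> lam * HA X + (1 - lam) * HA (y k) - \<alpha> * (lam * (1 - lam) / 2 * (N (X - y k))\<^sup>2)"
        unfolding u_eq using HAsc[OF XD yD[of k], of lam] lam_pos lam_lt1 by simp
      moreover have "\<alpha> * (lam * (1 - lam) / 2 * (N (X - y k))\<^sup>2) \<ge> 0" using \<alpha>_pos lam_pos lam_lt1 by simp
      ultimately show ?thesis by linarith
    qed
    have 6: "lin f g T u = lam * lin f g T X + (1 - lam) * lin f g T (y k)"
      unfolding lin_eq u_eq by (simp add: inner_add_right algebra_simps)
    have 7: "f u \<le> lin f g T u + L / 2 * (N (u - T))\<^sup>2"
      unfolding lin_def by (rule descent[OF norm f_smooth f_grad])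
    have 8: "L / 2 * (N (u - T))\<^sup>2 = (1 - lam) * (\<alpha> / 2 * r\<^sup>2)"
    proof -
      have "N (u - T) = lam * r" unfolding uT r_def using lam_pos by (simp add: isn_scale[OF norm])
      then have "L / 2 * (N (u - T))\<^sup>2 = (L * lam\<^sup>2) * r\<^sup>2 / 2" by (simp add: power_mult_distrib)
      then show ?thesis unfolding lamL by simp
    qed
    have A: "(1 - lam) * (Phi (y k) - (1 - lam) ^ k * Del + \<alpha> / 2 * r\<^sup>2) \<le> (1 - lam) * G k X"
      using Suc.IH 2 lam_lt1 by (intro mult_left_mono) auto
    have B: "(1 - lam) * (lin f g T (y k) + HA (y k)) \<le> (1 - lam) * Phi (y k)"
      using 4 lam_lt1 unfolding Phi_def by (intro mult_left_mono) auto
    have eA: "(1 - lam) * (Phi (y k) - (1 - lam) ^ k * Del + \<alpha> / 2 * r\<^sup>2) = (1 - lam) * Phi (y k) - (1 - lam) ^ Suc k * Del + (1 - lam) * (\<alpha> / 2 * r\<^sup>2)"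
      by (simp add: algebra_simps)
    have eB: "(1 - lam) * (lin f g T (y k) + HA (y k)) = (1 - lam) * lin f g T (y k) + (1 - lam) * HA (y k)"
      by (simp add: algebra_simps)
    have "Phi u - (1 - lam) ^ Suc k * Del \<le> G (Suc k) X"
    proof -
      have "Phi u = f u + HA u" unfolding Phi_def by simp
      then show ?thesis using 1 5 6 7 8 A B eA eB by linarith
    qed
    then show ?case unfolding u_def X_def .
  qed
  have GamI: "ACP (\<lambda>z. h z + ereal \<alpha> * w z) f g (y 0) (\<lambda>i. xt (Suc i)) (\<lambda>_. lam) = Gam"
    unfolding Gam_def ha_def ..
  have PhiE: "ereal (f (y k)) + (h (y k) + ereal \<alpha> * w (y k)) = ereal (Phi (y k))" for k
    using hafin[OF yD[of k]] unfolding ha_def Phi_def by simp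
  show ?thesis unfolding GamI
  proof
    fix k
    have R: "ereal (f (y k)) + (h (y k) + ereal \<alpha> * w (y k)) - ereal ((1 - lam) ^ k) *
        (ereal (f (y 0)) + (h (y 0) + ereal \<alpha> * w (y 0)) - Gam 0 (x 0))
        = ereal (Phi (y k) - (1 - lam) ^ k * Del)"
      unfolding PhiE Gam_fin[OF xD] Del_def by simp
    show "ereal (f (y k)) + (h (y k) + ereal \<alpha> * w (y k)) - ereal ((1 - lam) ^ k) *
        (ereal (f (y 0)) + (h (y 0) + ereal \<alpha> * w (y 0)) - Gam 0 (x 0)) \<le> (INF z. Gam k z)"
      unfolding R
    proof (rule INF_greatest)
      fix z :: "real^'n"
      show "ereal (Phi (y k) - (1 - lam) ^ k * Del) \<le> Gam k z"
      proof (cases "z \<in> D")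
        case True
        then show ?thesis unfolding Gam_fin[OF True] using main[of k] Gmin[OF True, of k] by simp
      next
        case False
        then show ?thesis unfolding Gam_eq hainf[OF False] by simp
      qed
    qed
  qed
qed

end
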